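(* Consider the 2-user system below and any statistics-unaware algorithm $\pi$ that transmits (i.e., chooses a nonzero vector) whenever at least one channel is ON. Then there exists a PMF $P\in\{\text{A},\text{B}\}$ for $S[t]$ such that, when $S[t]$ is i.i.d. with PMF $P$ and $\pi$ is run, $$\phi\big(\mathbb{E}[\overline{\mu}_1[T]],\,\mathbb{E}[\overline{\mu}_2[T]]\big)\;\le\;\phi^{opt}_P-\frac{1}{35T}\qquad\text{for all }T\in\{2,3,4,\ldots\},$$ where $\phi^{opt}_P=\log(1+3/4)+\log(1+1/4)$ is the optimal utility under $P$ (the same value for both A and B).
   Context: Two-user ON/OFF system: slotted time $t\in\{0,1,2,\ldots\}$; channel states $S[t]\in\{(ON,OFF),(ON,ON),(OFF,ON)\}$ are i.i.d. over slots. The allowed decision sets are: if $S[t]=(ON,OFF)$, $(\mu_1[t],\mu_2[t])\in\{(0,0),(1,0)\}$; if $S[t]=(ON,ON)$, $(\mu_1[t],\mu_2[t])\in\{(0,0),(1,0),(0,1)\}$; if $S[t]=(OFF,ON)$, $(\mu_1[t],\mu_2[t])\in\{(0,0),(0,1)\}$. PMF A assigns probabilities $3/4,1/4,0$ and PMF B assigns $0,1/4,3/4$ to $(ON,OFF),(ON,ON),(OFF,ON)$ respectively. The utility is $\phi(\gamma_1,\gamma_2)=\log(1+\gamma_1)+\log(1+\gamma_2)$ on $[0,1]^2$ (natural log). $\overline{\mu}_i[T]=\frac1T\sum_{t=0}^{T-1}\mu_i[t]$. A statistics-unaware algorithm is a fixed (possibly randomized) causal rule choosing $\mu[t]$ in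 the allowed set as a function of the current and past channel observations, past decisions, and internal randomness only; it is fixed before the PMF is chosen and does not depend on the PMF. The optimal utility under a PMF $P$ is $\phi^{opt}_P=\max_{x\in\Lambda_P}\phi(x)$, where $\Lambda_P$ is the set of expectations $\mathbb{E}[\mu[0]]$ achievable under $P$ by any (possibly randomized) rule choosing $\mu[0]$ from the allowed set given $S[0]$. *)

theory Defs
  imports "HOL-Probability.Probability"
begin

datatype chan = ON_OFF | ON_ON | OFF_ON

type_synonym dec = "real \<times> real"

definition allowed :: "chan \<Rightarrow> dec set" where
  "allowed s = (case s of
      ON_OFF \<Rightarrow> {(0,0),(1,0)}
    | ON_ON  \<Rightarrow> {(0,0),(1,0),(0,1)}
    | OFF_ON \<Rightarrow> {(0,0),(0,1)})"

definition pmfA :: "chan pmf" where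
  "pmfA = pmf_of_list [(ON_OFF, 3/4), (ON_ON, 1/4), (OFF_ON, 0)]"

definition pmfB :: "chan pmf" where
  "pmfB = pmf_of_list [(ON_OFF, 0), (ON_ON, 1/4), (OFF_ON, 3/4)]"

definition phi :: "real \<Rightarrow> real \<Rightarrow> real" where
  "phi g1 g2 = ln (1 + g1) + ln (1 + g2)"

text \<open>It does not depend on the PMF of the channel.\<close>
type_synonym policy = "(chan \<times> dec) list \<Rightarrow> chan \<Rightarrow> dec pmf"

definition valid_policy :: "policy \<Rightarrow> bool" where
  "valid_policy alg \<longleftrightarrow> (\<forall>h s. set_pmf (alg h s) \<subseteq> allowed s)"

definition always_transmits :: "policy \<Rightarrow> bool" where
  "always_transmits alg \<longleftrightarrow> (\<forall>h s. (0,0) \<notin> set_pmf (alg h s))"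

fun traj :: "chan pmf \<Rightarrow> policy \<Rightarrow> nat \<Rightarrow> (chan \<times> dec) list pmf" where
  "traj P alg 0 = return_pmf []"
| "traj P alg (Suc n) =
     bind_pmf (traj P alg n) (\<lambda>h. bind_pmf P (\<lambda>s. map_pmf (\<lambda>d. h @ [(s,d)]) (alg h s)))"

definition Emubar1 :: "chan pmf \<Rightarrow> policy \<Rightarrow> nat \<Rightarrow> real" where
  "Emubar1 P alg T = measure_pmf.expectation (traj P alg T)
      (\<lambda>h. (1 / real T) * (\<Sum>t<T. fst (snd (h ! t))))"

definition Emubar2 :: "chan pmf \<Rightarrow> policy \<Rightarrow> nat \<Rightarrow> real" where
  "Emubar2 P alg T = measure_pmf.expectation (traj P alg T)
      (\<lambda>h. (1 / real T) * (\<Sum>t<T. snd (snd (h ! t))))"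

definition Lambda :: "chan pmf \<Rightarrow> dec set" where
  "Lambda P = {(measure_pmf.expectation (bind_pmf P r) fst,
                measure_pmf.expectation (bind_pmf P r) snd) | r.
               \<forall>s. set_pmf (r s) \<subseteq> allowed s}"

definition phi_opt :: "chan pmf \<Rightarrow> real" where
  "phi_opt P = (SUP x\<in>Lambda P. phi (fst x) (snd x))"

end

theory Submission
  imports Defs
begin

lemma exp_bind_fin:
  fixes f :: "'b \<Rightarrow> real"
  assumes fM: "finite (set_pmf M)" and fN: "\<And>x. x \<in> set_pmf M \<Longrightarrow> finite (set_pmf (N x))"
  shows "measure_pmf.expectation (bind_pmf M N) f
       = measure_pmf.expectation M (\<lambda>x. measure_pmf.expectation (N x) f)"
proof -
  define A where "A = (\<Union>x\<in>set_pmf M. set_pmf (N x))"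
  have fA: "finite A" using fM fN by (auto simp: A_def)
  have "measure_pmf.expectation (bind_pmf M N) f = (\<Sum>a\<in>A. f a * pmf (bind_pmf M N) a)"
    by (rule integral_measure_pmf_real[OF fA]) (auto simp: A_def)
  also have "\<dots> = (\<Sum>a\<in>A. f a * (\<Sum>x\<in>set_pmf M. pmf (N x) a * pmf M x))"
    by (intro sum.cong refl arg_cong2[where f="(*)"] , simp only: pmf_bind,
        rule integral_measure_pmf_real[OF fM]) (auto simp: set_pmf_eq)
  also have "\<dots> = (\<Sum>x\<in>set_pmf M. (\<Sum>a\<in>A. f a * pmf (N x) a) * pmf M x)"
    by (simp add: sum_distrib_left sum_distrib_right mult_ac sum.swap[of _ A])
  also have "\<dots> = (\<Sum>x\<in>set_pmf M. measure_pmf.expectation (N x) f * pmf M x)"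
    by (intro sum.cong refl arg_cong2[where f="(*)"] integral_measure_pmf_real[OF fA, symmetric])
       (auto simp: A_def)
  also have "\<dots> = measure_pmf.expectation M (\<lambda>x. measure_pmf.expectation (N x) f)"
    by (rule integral_measure_pmf_real[OF fM, symmetric]) auto
  finally show ?thesis .
qed

lemma UNIV_chan: "(UNIV::chan set) = {ON_OFF, ON_ON, OFF_ON}"
proof -
  have "x \<in> {ON_OFF, ON_ON, OFF_ON}" for x :: chan by (cases x) auto
  then show ?thesis by auto
qed

lemma fin_UNIV_chan: "finite (UNIV::chan set)"
  by (simp add: UNIV_chan)

lemma fin_chan: "finite (set_pmf (P::chan pmf))"
  by (rule finite_subset[OF subset_UNIV fin_UNIV_chan])

lemma fin_allowed: "finite (allowed s)"
  by (cases s) (auto simp: allowed_def)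

lemma EA: "measure_pmf.expectation pmfA (g::chan\<Rightarrow>real) = 3/4 * g ON_OFF + 1/4 * g ON_ON"
proof -
  have wf: "pmf_of_list_wf [(ON_OFF, 3/4::real), (ON_ON, 1/4), (OFF_ON, 0)]"
    by (simp add: pmf_of_list_wf_def)
  have "measure_pmf.expectation pmfA g = (\<Sum>a\<in>UNIV. g a * pmf pmfA a)"
    by (rule integral_measure_pmf_real[OF fin_UNIV_chan]) auto
  then show ?thesis by (simp add: UNIV_chan pmfA_def pmf_pmf_of_list[OF wf])
qed

lemma EB: "measure_pmf.expectation pmfB (g::chan\<Rightarrow>real) = 1/4 * g ON_ON + 3/4 * g OFF_ON"
proof -
  have wf: "pmf_of_list_wf [(ON_OFF, 0::real), (ON_ON, 1/4), (OFF_ON, 3/4)]"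
    by (simp add: pmf_of_list_wf_def)
  have "measure_pmf.expectation pmfB g = (\<Sum>a\<in>UNIV. g a * pmf pmfB a)"
    by (rule integral_measure_pmf_real[OF fin_UNIV_chan]) auto
  then show ?thesis by (simp add: UNIV_chan pmfB_def pmf_pmf_of_list[OF wf])
qed

lemma exp_mono_fin:
  fixes f g :: "'a \<Rightarrow> real"
  assumes "finite (set_pmf q)" "\<And>x. x \<in> set_pmf q \<Longrightarrow> f x \<le> g x"
  shows "measure_pmf.expectation q f \<le> measure_pmf.expectation q g"
  using assms by (intro integral_mono_AE integrable_measure_pmf_finite) (auto simp: AE_measure_pmf_iff)

lemma exp_cong:
  fixes f g :: "'a \<Rightarrow> real"
  assumes "\<And>x. x \<in> set_pmf q \<Longrightarrow> f x = g x"
  shows "measure_pmf.expectation q f = measure_pmf.expectation q g"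
  using assms by (intro integral_cong_AE) (auto simp: AE_measure_pmf_iff)

lemma exp_add_fin:
  fixes f g :: "'a \<Rightarrow> real"
  assumes "finite (set_pmf q)"
  shows "measure_pmf.expectation q (\<lambda>x. f x + g x) = measure_pmf.expectation q f + measure_pmf.expectation q g"
  using assms by (intro Bochner_Integration.integral_add integrable_measure_pmf_finite)

lemma exp_const: "measure_pmf.expectation q (\<lambda>x. c::real) = c"
  by simp

lemma exp_nonneg:
  fixes f :: "'a \<Rightarrow> real"
  assumes "\<And>x. x \<in> set_pmf q \<Longrightarrow> 0 \<le> f x"
  shows "0 \<le> measure_pmf.expectation q f"
  using assms by (intro integral_nonneg_AE) (auto simp: AE_measure_pmf_iff)

lemma tangent: fixes z c :: real assumes "0 < z" "0 < c" shows "ln z \<le> ln c + (z - c) / c"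
proof -
  have "ln (z / c) \<le> z / c - 1" by (intro ln_le_minus_one) (simp add: assms)
  then show ?thesis using assms by (simp add: ln_div diff_divide_distrib)
qed


lemma dec_facts:
  assumes "d \<in> allowed s" "d \<noteq> (0,0)"
  shows "fst d + snd d = 1" "0 \<le> fst d" "0 \<le> snd d"
    "s = ON_OFF \<Longrightarrow> d = (1,0)" "s = OFF_ON \<Longrightarrow> d = (0,1)"
  using assms by (cases s; auto simp: allowed_def)+

lemma dec_facts2:
  assumes "d \<in> allowed s"
  shows "fst d + snd d \<le> 1" "0 \<le> fst d" "0 \<le> snd d"
    "s = ON_OFF \<Longrightarrow> snd d = 0" "s = OFF_ON \<Longrightarrow> fst d = 0"
  using assms by (cases s; auto simp: allowed_def)+

lemma alg_supp:
  assumes "valid_policy alg" "always_transmits alg" "d \<in> set_pmf (alg h s)"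
  shows "d \<in> allowed s" "d \<noteq> (0,0)"
  using assms unfolding valid_policy_def always_transmits_def by auto

lemma alg_fin: "valid_policy alg \<Longrightarrow> finite (set_pmf (alg h s))"
  unfolding valid_policy_def by (meson fin_allowed finite_subset)

lemma traj_fin: "valid_policy alg \<Longrightarrow> finite (set_pmf (traj P alg n))"
  by (induction n) (auto simp: fin_chan alg_fin)

lemma traj_supp:
  assumes "valid_policy alg" "always_transmits alg"
  shows "h \<in> set_pmf (traj P alg n) \<Longrightarrow> length h = n \<and> (\<forall>x\<in>set h. snd x \<in> allowed (fst x) \<and> snd x \<noteq> (0,0))"
proof (induction n arbitrary: h)
  case 0 then show ?case by simp
next
  case (Suc n)
  then show ?case using alg_supp[OF assms] by fastforce
qed

lemma traj_step:
  fixes F :: "(chan \<times> dec) list \<Rightarrow> real"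
  assumes "valid_policy alg"
  shows "measure_pmf.expectation (traj P alg (Suc n)) F =
    measure_pmf.expectation (traj P alg n) (\<lambda>h. measure_pmf.expectation P
       (\<lambda>s. measure_pmf.expectation (alg h s) (\<lambda>d. F (h @ [(s,d)]))))"
proof -
  have "measure_pmf.expectation (traj P alg (Suc n)) F =
    measure_pmf.expectation (traj P alg n) (\<lambda>h. measure_pmf.expectation
      (bind_pmf P (\<lambda>s. map_pmf (\<lambda>d. h @ [(s,d)]) (alg h s))) F)"
    unfolding traj.simps by (rule exp_bind_fin) (auto simp: traj_fin[OF assms] fin_chan alg_fin[OF assms])
  also have "\<dots> = measure_pmf.expectation (traj P alg n) (\<lambda>h. measure_pmf.expectation P
       (\<lambda>s. measure_pmf.expectation (alg h s) (\<lambda>d. F (h @ [(s,d)]))))"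
    by (subst exp_bind_fin) (auto simp: fin_chan alg_fin[OF assms])
  finally show ?thesis .
qed

definition Ssum :: "(dec \<Rightarrow> real) \<Rightarrow> (chan \<times> dec) list \<Rightarrow> real" where
  "Ssum f h = (\<Sum>t<length h. f (snd (h ! t)))"

lemma Ssum_snoc: "Ssum f (h @ [x]) = Ssum f h + f (snd x)"
  unfolding Ssum_def by (simp add: nth_append)

lemma growth:
  assumes v: "valid_policy alg" and a: "always_transmits alg"
    and lb: "\<And>h. measure_pmf.expectation P (\<lambda>s. measure_pmf.expectation (alg h s) f) \<ge> 3/4"
  shows "measure_pmf.expectation (traj P alg (Suc n)) (Ssum f) \<ge>
     3/4 * real n + measure_pmf.expectation P (\<lambda>s. measure_pmf.expectation (alg [] s) f)"
proof -
  have step: "measure_pmf.expectation (traj P alg (Suc m)) (Ssum f) =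
     measure_pmf.expectation (traj P alg m) (\<lambda>h. Ssum f h +
        measure_pmf.expectation P (\<lambda>s. measure_pmf.expectation (alg h s) f))" for m
  proof -
    have "measure_pmf.expectation P (\<lambda>s. measure_pmf.expectation (alg h s) (\<lambda>d. Ssum f (h @ [(s,d)])))
       = Ssum f h + measure_pmf.expectation P (\<lambda>s. measure_pmf.expectation (alg h s) f)" for h
      by (simp add: Ssum_snoc exp_add_fin alg_fin[OF v] fin_chan)
    then show ?thesis unfolding traj_step[OF v] by simp
  qed
  show ?thesis
  proof (induction n)
    case 0 then show ?case unfolding step by (simp add: Ssum_def)
  next
    case (Suc n)
    have "measure_pmf.expectation (traj P alg (Suc (Suc n))) (Ssum f)
       \<ge> measure_pmf.expectation (traj P alg (Suc n)) (\<lambda>h. Ssum f h + 3/4)"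
      unfolding step by (intro exp_mono_fin traj_fin[OF v]) (use lb in auto)
    also have "measure_pmf.expectation (traj P alg (Suc n)) (\<lambda>h. Ssum f h + 3/4) =
       measure_pmf.expectation (traj P alg (Suc n)) (Ssum f) + 3/4"
      by (subst exp_add_fin[OF traj_fin[OF v]]) simp
    finally have "measure_pmf.expectation (traj P alg (Suc n)) (Ssum f) + 3/4
      \<le> measure_pmf.expectation (traj P alg (Suc (Suc n))) (Ssum f)" .
    then show ?case using Suc.IH by (simp only: of_nat_Suc distrib_left)
  qed
qed


lemma qfacts:
  assumes v: "valid_policy alg" and a: "always_transmits alg"
  shows "measure_pmf.expectation (alg h s) fst + measure_pmf.expectation (alg h s) snd = 1"
    "0 \<le> measure_pmf.expectation (alg h s) fst" "0 \<le> measure_pmf.expectation (alg h s) snd"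
    "s = ON_OFF \<Longrightarrow> measure_pmf.expectation (alg h s) fst = 1"
    "s = OFF_ON \<Longrightarrow> measure_pmf.expectation (alg h s) snd = 1"
proof -
  note F = dec_facts[OF alg_supp[OF v a]]
  have "measure_pmf.expectation (alg h s) fst + measure_pmf.expectation (alg h s) snd
      = measure_pmf.expectation (alg h s) (\<lambda>d. fst d + snd d)"
    by (rule exp_add_fin[OF alg_fin[OF v], symmetric])
  also have "\<dots> = measure_pmf.expectation (alg h s) (\<lambda>d. 1)"
    by (rule exp_cong) (use F in auto)
  finally show "measure_pmf.expectation (alg h s) fst + measure_pmf.expectation (alg h s) snd = 1"
    by simp
  show "0 \<le> measure_pmf.expectation (alg h s) fst" "0 \<le> measure_pmf.expectation (alg h s) snd"
    by (rule exp_nonneg, use F in auto)+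
  show "s = ON_OFF \<Longrightarrow> measure_pmf.expectation (alg h s) fst = 1"
  proof -
    assume "s = ON_OFF"
    then have "measure_pmf.expectation (alg h s) fst = measure_pmf.expectation (alg h s) (\<lambda>d. 1)"
      by (intro exp_cong) (use F in auto)
    then show ?thesis by simp
  qed
  show "s = OFF_ON \<Longrightarrow> measure_pmf.expectation (alg h s) snd = 1"
  proof -
    assume "s = OFF_ON"
    then have "measure_pmf.expectation (alg h s) snd = measure_pmf.expectation (alg h s) (\<lambda>d. 1)"
      by (intro exp_cong) (use F in auto)
    then show ?thesis by simp
  qed
qed

lemma rfacts:
  assumes sub: "set_pmf q \<subseteq> allowed s"
  shows "measure_pmf.expectation q fst + measure_pmf.expectation q snd \<le> 1"
    "0 \<le> measure_pmf.expectation q fst" "0 \<le> measure_pmf.expectation q snd"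
    "s = ON_OFF \<Longrightarrow> measure_pmf.expectation q snd = 0"
    "s = OFF_ON \<Longrightarrow> measure_pmf.expectation q fst = 0"
proof -
  have fin: "finite (set_pmf q)" using sub fin_allowed finite_subset by blast
  have F: "x \<in> set_pmf q \<Longrightarrow> x \<in> allowed s" for x using sub by auto
  note G = dec_facts2[OF F]
  have "measure_pmf.expectation q fst + measure_pmf.expectation q snd
      = measure_pmf.expectation q (\<lambda>d. fst d + snd d)"
    by (rule exp_add_fin[OF fin, symmetric])
  also have "\<dots> \<le> measure_pmf.expectation q (\<lambda>d. 1)"
    by (rule exp_mono_fin[OF fin]) (use G in auto)
  finally show "measure_pmf.expectation q fst + measure_pmf.expectation q snd \<le> 1"
    by simp
  show "0 \<le> measure_pmf.expectation q fst" "0 \<le> measure_pmf.expectation q snd"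
    by (rule exp_nonneg, use G in auto)+
  show "s = ON_OFF \<Longrightarrow> measure_pmf.expectation q snd = 0"
  proof -
    assume "s = ON_OFF"
    then have "measure_pmf.expectation q snd = measure_pmf.expectation q (\<lambda>d. 0)"
      by (intro exp_cong) (use G in auto)
    then show ?thesis by simp
  qed
  show "s = OFF_ON \<Longrightarrow> measure_pmf.expectation q fst = 0"
  proof -
    assume "s = OFF_ON"
    then have "measure_pmf.expectation q fst = measure_pmf.expectation q (\<lambda>d. 0)"
      by (intro exp_cong) (use G in auto)
    then show ?thesis by simp
  qed
qed

lemma Emubar1_eq:
  assumes v: "valid_policy alg" and a: "always_transmits alg"
  shows "Emubar1 P alg T = (1 / real T) * measure_pmf.expectation (traj P alg T) (Ssum fst)"
proof -
  have "Emubar1 P alg T = measure_pmf.expectation (traj P alg T) (\<lambda>h. (1 / real T) * Ssum fst h)"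
    unfolding Emubar1_def by (rule exp_cong) (use traj_supp[OF v a] in \<open>auto simp: Ssum_def\<close>)
  then show ?thesis by simp
qed

lemma Emubar2_eq:
  assumes v: "valid_policy alg" and a: "always_transmits alg"
  shows "Emubar2 P alg T = (1 / real T) * measure_pmf.expectation (traj P alg T) (Ssum snd)"
proof -
  have "Emubar2 P alg T = measure_pmf.expectation (traj P alg T) (\<lambda>h. (1 / real T) * Ssum snd h)"
    unfolding Emubar2_def by (rule exp_cong) (use traj_supp[OF v a] in \<open>auto simp: Ssum_def\<close>)
  then show ?thesis by simp
qed

lemma Ssum_sum:
  assumes v: "valid_policy alg" and a: "always_transmits alg"
  shows "measure_pmf.expectation (traj P alg T) (Ssum fst) + measure_pmf.expectation (traj P alg T) (Ssum snd) = real T"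
proof -
  have "measure_pmf.expectation (traj P alg T) (Ssum fst) + measure_pmf.expectation (traj P alg T) (Ssum snd)
     = measure_pmf.expectation (traj P alg T) (\<lambda>h. Ssum fst h + Ssum snd h)"
    by (rule exp_add_fin[OF traj_fin[OF v], symmetric])
  also have "\<dots> = measure_pmf.expectation (traj P alg T) (\<lambda>h. real T)"
  proof (rule exp_cong)
    fix h assume h: "h \<in> set_pmf (traj P alg T)"
    note S = traj_supp[OF v a h]
    have "Ssum fst h + Ssum snd h = (\<Sum>t<length h. fst (snd (h!t)) + snd (snd (h!t)))"
      by (simp add: Ssum_def sum.distrib)
    also have "\<dots> = (\<Sum>t<length h. 1)"
    proof (rule sum.cong[OF refl])
      fix t assume "t \<in> {..<length h}"
      then have "h ! t \<in> set h" by simp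
      then show "fst (snd (h!t)) + snd (snd (h!t)) = 1" using S dec_facts by blast
    qed
    finally show "Ssum fst h + Ssum snd h = real T" using S by simp
  qed
  finally show ?thesis by simp
qed

lemma Ssum_nonneg:
  assumes v: "valid_policy alg" and a: "always_transmits alg"
  shows "0 \<le> measure_pmf.expectation (traj P alg T) (Ssum snd)"
proof (rule exp_nonneg)
  fix h assume h: "h \<in> set_pmf (traj P alg T)"
  note S = traj_supp[OF v a h]
  show "0 \<le> Ssum snd h" unfolding Ssum_def
  proof (rule sum_nonneg)
    fix t assume "t \<in> {..<length h}"
    then have "h ! t \<in> set h" by simp
    then show "0 \<le> snd (snd (h!t))" using S dec_facts by blast
  qed
qed

lemma Ssum_nonneg1:
  assumes v: "valid_policy alg" and a: "always_transmits alg"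
  shows "0 \<le> measure_pmf.expectation (traj P alg T) (Ssum fst)"
proof (rule exp_nonneg)
  fix h assume h: "h \<in> set_pmf (traj P alg T)"
  note S = traj_supp[OF v a h]
  show "0 \<le> Ssum fst h" unfolding Ssum_def
  proof (rule sum_nonneg)
    fix t assume "t \<in> {..<length h}"
    then have "h ! t \<in> set h" by simp
    then show "0 \<le> fst (snd (h!t))" using S dec_facts by blast
  qed
qed

lemma phi_boundA:
  fixes a b :: real
  assumes "0 \<le> a" "0 \<le> b" "20 * a + 28 * b \<le> 22"
  shows "phi a b \<le> ln (1 + 3/4) + ln (1 + 1/4)"
proof -
  have "ln (1 + a) \<le> ln (1 + 3/4) + ((1 + a) - (1 + 3/4)) / (1 + 3/4)"
    using assms by (intro tangent) auto
  moreover have "ln (1 + b) \<le> ln (1 + 1/4) + ((1 + b) - (1 + 1/4)) / (1 + 1/4)"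
    using assms by (intro tangent) auto
  ultimately show ?thesis using assms unfolding phi_def by (simp add: field_simps)
qed

lemma phi_boundB:
  fixes a b :: real
  assumes "0 \<le> a" "0 \<le> b" "28 * a + 20 * b \<le> 22"
  shows "phi a b \<le> ln (1 + 3/4) + ln (1 + 1/4)"
proof -
  have "ln (1 + b) \<le> ln (1 + 3/4) + ((1 + b) - (1 + 3/4)) / (1 + 3/4)"
    using assms by (intro tangent) auto
  moreover have "ln (1 + a) \<le> ln (1 + 1/4) + ((1 + a) - (1 + 1/4)) / (1 + 1/4)"
    using assms by (intro tangent) auto
  ultimately show ?thesis using assms unfolding phi_def by (simp add: field_simps)
qed


lemma bind_exp:
  assumes "\<forall>s. set_pmf (r s) \<subseteq> allowed s"
  shows "measure_pmf.expectation (bind_pmf P r) (f::dec\<Rightarrow>real) = measure_pmf.expectation P (\<lambda>s. measure_pmf.expectation (r s) f)"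
  using assms by (intro exp_bind_fin fin_chan) (meson fin_allowed finite_subset)

lemma phi_optA: "phi_opt pmfA = ln (1 + 3/4) + ln (1 + 1/4)"
  unfolding phi_opt_def
proof (rule cSup_eq_maximum)
  define r where "r = (\<lambda>s::chan. return_pmf (case s of ON_OFF \<Rightarrow> (1::real, 0::real) | _ \<Rightarrow> (0, 1)))"
  have sub: "\<forall>s. set_pmf (r s) \<subseteq> allowed s" unfolding r_def
    by (intro allI, case_tac s) (auto simp: allowed_def)
  have "(3/4, 1/4) \<in> Lambda pmfA" unfolding Lambda_def
    using sub by (intro CollectI exI[of _ r]) (auto simp: bind_exp EA r_def)
  then show "ln (1 + 3/4) + ln (1 + 1/4) \<in> (\<lambda>x. phi (fst x) (snd x)) ` Lambda pmfA"
    by (intro image_eqI[of _ _ "(3/4, 1/4)"]) (auto simp: phi_def)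
next
  fix y assume "y \<in> (\<lambda>x. phi (fst x) (snd x)) ` Lambda pmfA"
  then obtain r where sub: "\<forall>s. set_pmf (r s) \<subseteq> allowed s" and
    y: "y = phi (measure_pmf.expectation (bind_pmf pmfA r) fst) (measure_pmf.expectation (bind_pmf pmfA r) snd)"
    unfolding Lambda_def by auto
  note R1 = rfacts[of "r ON_OFF" ON_OFF] and R2 = rfacts[of "r ON_ON" ON_ON]
  show "y \<le> ln (1 + 3/4) + ln (1 + 1/4)" unfolding y bind_exp[OF sub] EA
    using R1 R2 sub by (intro phi_boundA) auto
qed

lemma phi_optB: "phi_opt pmfB = ln (1 + 3/4) + ln (1 + 1/4)"
  unfolding phi_opt_def
proof (rule cSup_eq_maximum)
  define r where "r = (\<lambda>s::chan. return_pmf (case s of OFF_ON \<Rightarrow> (0::real, 1::real) | _ \<Rightarrow> (1, 0)))"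
  have sub: "\<forall>s. set_pmf (r s) \<subseteq> allowed s" unfolding r_def
    by (intro allI, case_tac s) (auto simp: allowed_def)
  have "(1/4, 3/4) \<in> Lambda pmfB" unfolding Lambda_def
    using sub by (intro CollectI exI[of _ r]) (auto simp: bind_exp EB r_def)
  then show "ln (1 + 3/4) + ln (1 + 1/4) \<in> (\<lambda>x. phi (fst x) (snd x)) ` Lambda pmfB"
    by (intro image_eqI[of _ _ "(1/4, 3/4)"]) (auto simp: phi_def)
next
  fix y assume "y \<in> (\<lambda>x. phi (fst x) (snd x)) ` Lambda pmfB"
  then obtain r where sub: "\<forall>s. set_pmf (r s) \<subseteq> allowed s" and
    y: "y = phi (measure_pmf.expectation (bind_pmf pmfB r) fst) (measure_pmf.expectation (bind_pmf pmfB r) snd)"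
    unfolding Lambda_def by auto
  note R1 = rfacts[of "r OFF_ON" OFF_ON] and R2 = rfacts[of "r ON_ON" ON_ON]
  show "y \<le> ln (1 + 3/4) + ln (1 + 1/4)" unfolding y bind_exp[OF sub] EB
    using R1 R2 sub by (intro phi_boundB) auto
qed


lemma final_bound:
  fixes S1 S2 T :: real
  assumes T: "T > 0" and S: "S1 + S2 = T" "0 \<le> S1" "0 \<le> S2" and big: "8 * S1 \<ge> 6 * T + 1"
  shows "phi (S1 / T) (S2 / T) \<le> ln (1 + 3/4) + ln (1 + 1/4) - 1 / (35 * T)"
proof -
  have p: "0 \<le> S1/T" "0 \<le> S2/T" using assms by auto
  have "ln (1 + S1/T) \<le> ln (1 + 3/4) + ((1 + S1/T) - (1 + 3/4)) / (1 + 3/4)"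
    using p by (intro tangent) auto
  moreover have "ln (1 + S2/T) \<le> ln (1 + 1/4) + ((1 + S2/T) - (1 + 1/4)) / (1 + 1/4)"
    using p by (intro tangent) auto
  ultimately have "phi (S1 / T) (S2 / T) \<le> ln (1 + 3/4) + ln (1 + 1/4) + (20*S1 + 28*S2 - 22*T)/(35*T)"
    using T unfolding phi_def by (simp add: field_simps)
  moreover have "(20*S1 + 28*S2 - 22*T)/(35*T) \<le> (-1)/(35*T)"
    using assms by (intro divide_right_mono) auto
  ultimately show ?thesis by simp
qed

lemma final_boundB:
  fixes S1 S2 T :: real
  assumes T: "T > 0" and S: "S1 + S2 = T" "0 \<le> S1" "0 \<le> S2" and big: "8 * S2 \<ge> 6 * T + 1"
  shows "phi (S1 / T) (S2 / T) \<le> ln (1 + 3/4) + ln (1 + 1/4) - 1 / (35 * T)"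
  using final_bound[of T S2 S1] assms unfolding phi_def by (simp add: add.commute)

theorem mainTheorem7:
  fixes alg :: policy
  assumes "valid_policy alg"
    and "always_transmits alg"
  shows "\<exists>P\<in>{pmfA, pmfB}.
           phi_opt P = ln (1 + 3/4) + ln (1 + 1/4) \<and>
           (\<forall>T::nat. T \<ge> 2 \<longrightarrow>
              phi (Emubar1 P alg T) (Emubar2 P alg T) \<le> phi_opt P - 1 / (35 * real T))"
proof -
  note v = assms(1) and a = assms(2)
  note Q = qfacts[OF v a]
  define q1 where "q1 = measure_pmf.expectation (alg [] ON_ON) fst"
  define q2 where "q2 = measure_pmf.expectation (alg [] ON_ON) snd"
  have q12: "q1 + q2 = 1" unfolding q1_def q2_def by (rule Q(1))
  show ?thesis
  proof (cases "q1 \<ge> 1/2")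
    case True
    have lb: "measure_pmf.expectation pmfA (\<lambda>s. measure_pmf.expectation (alg h s) fst) \<ge> 3/4" for h
      unfolding EA using Q(2)[of h ON_ON] Q(4)[of ON_OFF h] by simp
    have "\<forall>T::nat. T \<ge> 2 \<longrightarrow>
              phi (Emubar1 pmfA alg T) (Emubar2 pmfA alg T) \<le> phi_opt pmfA - 1 / (35 * real T)"
    proof (intro allI impI)
      fix T :: nat assume T2: "T \<ge> 2"
      then obtain n where Tn: "T = Suc n" by (cases T) auto
      have G: "measure_pmf.expectation (traj pmfA alg T) (Ssum fst) \<ge> 3/4 * real n + (3/4 + q1/4)"
        using growth[OF v a lb, of n] unfolding Tn EA q1_def using Q(4)[of ON_OFF "[]"] by simp
      show "phi (Emubar1 pmfA alg T) (Emubar2 pmfA alg T) \<le> phi_opt pmfA - 1 / (35 * real T)"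
        unfolding Emubar1_eq[OF v a] Emubar2_eq[OF v a] phi_optA
        using final_bound[of "real T" "measure_pmf.expectation (traj pmfA alg T) (Ssum fst)"
              "measure_pmf.expectation (traj pmfA alg T) (Ssum snd)"]
          Ssum_sum[OF v a, of pmfA T] Ssum_nonneg[OF v a, of pmfA T] Ssum_nonneg1[OF v a, of pmfA T]
          G True T2 Tn by simp
    qed
    then show ?thesis using phi_optA by auto
  next
    case False
    have lb: "measure_pmf.expectation pmfB (\<lambda>s. measure_pmf.expectation (alg h s) snd) \<ge> 3/4" for h
      unfolding EB using Q(3)[of h ON_ON] Q(5)[of OFF_ON h] by simp
    have "\<forall>T::nat. T \<ge> 2 \<longrightarrow>
              phi (Emubar1 pmfB alg T) (Emubar2 pmfB alg T) \<le> phi_opt pmfB - 1 / (35 * real T)"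
    proof (intro allI impI)
      fix T :: nat assume T2: "T \<ge> 2"
      then obtain n where Tn: "T = Suc n" by (cases T) auto
      have G: "measure_pmf.expectation (traj pmfB alg T) (Ssum snd) \<ge> 3/4 * real n + (3/4 + q2/4)"
        using growth[OF v a lb, of n] unfolding Tn EB q2_def using Q(5)[of OFF_ON "[]"] by simp
      show "phi (Emubar1 pmfB alg T) (Emubar2 pmfB alg T) \<le> phi_opt pmfB - 1 / (35 * real T)"
        unfolding Emubar1_eq[OF v a] Emubar2_eq[OF v a] phi_optB
        using final_boundB[of "real T" "measure_pmf.expectation (traj pmfB alg T) (Ssum fst)"
              "measure_pmf.expectation (traj pmfB alg T) (Ssum snd)"]
          Ssum_sum[OF v a, of pmfB T] Ssum_nonneg[OF v a, of pmfB T] Ssum_nonneg1[OF v a, of pmfB T]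
          G False q12 T2 Tn by simp
    qed
    then show ?thesis using phi_optB by auto
  qed
qed

end
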